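(* Let $\mu$ be a complex Borel measure of bounded total variation on $\mathbb{T}$ with $D_n(\mu)\neq0$ for all $n\ge1$, and suppose its Baxter parameters satisfy $\sum_{n}|\alpha_n|^2<\infty$ and $\sum_n|\beta_n|^2<\infty$. If $z=e^{i\theta}\in E\cap M$, then $\lim_{n\to\infty}u_n(e^{i\theta})$ exists and is finite. Likewise, if $z=e^{i\theta}\in\tilde E\cap M$, then $\lim_{n\to\infty}v_n(e^{i\theta})$ exists and is finite.
   Context: Moments $\mu_k=\int_{\mathbb{T}}\zeta^{-k}d\mu(\zeta)$; $D_n(\mu)=\det(\mu_{i-j})_{i,j=0}^{n-1}$, $D_0=1$. Baxter parameters: $\beta_n=(-1)^nD_n(\zeta\mu)/D_n(\mu)$, $\alpha_n=(-1)^nD_n(\zeta^{-1}\mu)/D_n(\mu)$, where $\zeta\mu$, $\zeta^{-1}\mu$ are the measures $\zeta\,d\mu(\zeta)$, $\zeta^{-1}d\mu(\zeta)$. The polynomials: $u_n(z)=\frac{1}{D_{n+1}(\mu)}\det A_n(z)$, where $A_n(z)$ is the $(n+1)\times(n+1)$ matrix whose rows $i=0,\dots,n-1$ are $(\mu_{-i},\mu_{-i+1},\dots,\mu_{-i+n})$ and whose last row is $(z^n,z^{n-1},\dots,1)$; $v_n(z)=\frac1{D_{n+1}(\mu)}\det B_n(z)$, where $B_n(z)$ has rows $i=0,\dots,n-1$ equal to $(\mu_i,\mu_{i-1},\dots,\mu_{i-n})$ and last row $(z^{-n},z^{-n+1},\dots,1)$. Define $q_{21}(z,n)=-\sum_{k=n+1}^\infty\alpha_kz^{k-n}$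 and $\tilde q_{21}(z,n)=-\sum_{k=n+1}^\infty\beta_kz^{n-k}$. Sets on $\mathbb{T}$: $M=\{z=e^{i\theta}:\ \sum_{k\ge1}\beta_kz^{-k}\text{ and }\sum_{k\ge1}\alpha_kz^k\text{ both converge}\}$ (i.e. $|\sum_{k=1}^\infty\beta_kz^{-k}|+|\sum_{k=1}^\infty\alpha_kz^k|<\infty$); $E=\{z=e^{i\theta}:\sum_{k=0}^\infty|\beta_{k+1}q_{21}(z,k)|<\infty\}$; $\tilde E=\{z=e^{i\theta}:\sum_{k=0}^\infty|\alpha_{k+1}\tilde q_{21}(z,k)|<\infty\}$. *)

theory Defs
  imports "HOL-Analysis.Analysis" "Jordan_Normal_Form.Determinant"
begin

text \<open>A complex Borel measure of bounded total variation on the unit circle is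
represented in polar/density form: mu = h nu, where nu is a finite positive Borel
measure on the complex plane concentrated on the unit circle and h is
nu-integrable.\<close>

definition cmeasure_on_circle :: "complex measure \<Rightarrow> (complex \<Rightarrow> complex) \<Rightarrow> bool" where
  "cmeasure_on_circle \<nu> h \<longleftrightarrow> sets \<nu> = sets borel \<and> finite_measure \<nu> \<and>
     emeasure \<nu> (- sphere 0 1) = 0 \<and> integrable \<nu> h"

definition moment :: "complex measure \<Rightarrow> (complex \<Rightarrow> complex) \<Rightarrow> int \<Rightarrow> complex" where
  "moment \<nu> h k = (LINT \<zeta>|\<nu>. \<zeta> powi (-k) * h \<zeta>)"

definition toeplitz_det :: "(int \<Rightarrow> complex) \<Rightarrow> nat \<Rightarrow> complex" where
  "toeplitz_det m n = Determinant.det (Matrix.mat n n (\<lambda>(i,j). m (int i - int j)))"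

definition Dn :: "complex measure \<Rightarrow> (complex \<Rightarrow> complex) \<Rightarrow> nat \<Rightarrow> complex" where
  "Dn \<nu> h n = toeplitz_det (moment \<nu> h) n"

definition baxter_beta :: "complex measure \<Rightarrow> (complex \<Rightarrow> complex) \<Rightarrow> nat \<Rightarrow> complex" where
  "baxter_beta \<nu> h n = (-1) ^ n * Dn \<nu> (\<lambda>\<zeta>. \<zeta> * h \<zeta>) n / Dn \<nu> h n"

definition baxter_alpha :: "complex measure \<Rightarrow> (complex \<Rightarrow> complex) \<Rightarrow> nat \<Rightarrow> complex" where
  "baxter_alpha \<nu> h n = (-1) ^ n * Dn \<nu> (\<lambda>\<zeta>. inverse \<zeta> * h \<zeta>) n / Dn \<nu> h n"

definition u_poly :: "complex measure \<Rightarrow> (complex \<Rightarrow> complex) \<Rightarrow> nat \<Rightarrow> complex \<Rightarrow> complex" where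
  "u_poly \<nu> h n z = Determinant.det (Matrix.mat (n+1) (n+1) (\<lambda>(i,j).
      if i < n then moment \<nu> h (int j - int i) else z ^ (n - j))) / Dn \<nu> h (n+1)"

definition v_poly :: "complex measure \<Rightarrow> (complex \<Rightarrow> complex) \<Rightarrow> nat \<Rightarrow> complex \<Rightarrow> complex" where
  "v_poly \<nu> h n z = Determinant.det (Matrix.mat (n+1) (n+1) (\<lambda>(i,j).
      if i < n then moment \<nu> h (int i - int j) else z powi (int j - int n))) / Dn \<nu> h (n+1)"

definition q21 :: "(nat \<Rightarrow> complex) \<Rightarrow> complex \<Rightarrow> nat \<Rightarrow> complex" where
  "q21 \<alpha> z n = - (\<Sum>j. \<alpha> (n + 1 + j) * z ^ (j + 1))"

definition q21_tilde :: "(nat \<Rightarrow> complex) \<Rightarrow> complex \<Rightarrow> nat \<Rightarrow> complex" where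
  "q21_tilde \<beta> z n = - (\<Sum>j. \<beta> (n + 1 + j) * z powi (- int (j + 1)))"

definition set_M :: "(nat \<Rightarrow> complex) \<Rightarrow> (nat \<Rightarrow> complex) \<Rightarrow> complex set" where
  "set_M \<alpha> \<beta> = {z. cmod z = 1 \<and> summable (\<lambda>k. \<beta> (k+1) * z powi (- int (k+1)))
                     \<and> summable (\<lambda>k. \<alpha> (k+1) * z ^ (k+1))}"

definition set_E :: "(nat \<Rightarrow> complex) \<Rightarrow> (nat \<Rightarrow> complex) \<Rightarrow> complex set" where
  "set_E \<alpha> \<beta> = {z. cmod z = 1 \<and> (\<forall>n. summable (\<lambda>j. \<alpha> (n + 1 + j) * z ^ (j + 1)))
                     \<and> summable (\<lambda>k. cmod (\<beta> (k+1) * q21 \<alpha> z k))}"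

definition set_E_tilde :: "(nat \<Rightarrow> complex) \<Rightarrow> (nat \<Rightarrow> complex) \<Rightarrow> complex set" where
  "set_E_tilde \<alpha> \<beta> = {z. cmod z = 1 \<and> (\<forall>n. summable (\<lambda>j. \<beta> (n + 1 + j) * z powi (- int (j + 1))))
                     \<and> summable (\<lambda>k. cmod (\<alpha> (k+1) * q21_tilde \<beta> z k))}"

end

theory Submission
  imports Defs
begin


lemma tail_lim:
  fixes f :: "nat \<Rightarrow> complex"
  assumes "summable f"
  shows "(\<lambda>k. \<Sum>j. f (j + k)) \<longlonglongrightarrow> 0"
proof -
  have eq: "(\<lambda>k. \<Sum>j. f (j + k)) = (\<lambda>k. suminf f - (\<Sum>i<k. f i))"
    using suminf_split_initial_segment[OF assms] by (auto simp: algebra_simps)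
  have "(\<lambda>k. suminf f - (\<Sum>i<k. f i)) \<longlonglongrightarrow> suminf f - suminf f"
    by (intro tendsto_diff tendsto_const summable_LIMSEQ assms)
  thus ?thesis unfolding eq by simp
qed

lemma conv_diff:
  fixes x :: "nat \<Rightarrow> complex"
  assumes "summable (\<lambda>n. norm (x (Suc n) - x n))"
  shows "convergent x"
proof -
  have s: "summable (\<lambda>n. x (Suc n) - x n)" using summable_norm_cancel[OF assms] .
  have "(\<lambda>n. x 0 + (\<Sum>i<n. x (Suc i) - x i)) \<longlonglongrightarrow> x 0 + suminf (\<lambda>n. x (Suc n) - x n)"
    by (intro tendsto_add tendsto_const summable_LIMSEQ s)
  moreover have "(\<lambda>n. x 0 + (\<Sum>i<n. x (Suc i) - x i)) = x"
    by (simp add: sum_lessThan_telescope)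
  ultimately show ?thesis by (auto simp: convergent_def)
qed

lemma growth:
  fixes s d :: "nat \<Rightarrow> real"
  assumes s0: "\<And>n. 0 \<le> s n" and d0: "\<And>n. 0 \<le> d n" and sd: "summable d"
    and rec: "\<And>n. s (Suc n) \<le> (1 + d n) * s n"
  shows "s n \<le> s 0 * exp (suminf d)"
proof -
  have "s n \<le> s 0 * exp (\<Sum>i<n. d i)" for n
  proof (induction n)
    case 0 then show ?case by simp
  next
    case (Suc n)
    have "s (Suc n) \<le> (1 + d n) * s n" by (rule rec)
    also have "\<dots> \<le> (1 + d n) * (s 0 * exp (\<Sum>i<n. d i))"
      using Suc d0[of n] by (intro mult_left_mono) auto
    also have "\<dots> \<le> exp (d n) * (s 0 * exp (\<Sum>i<n. d i))"
      using s0[of 0] by (intro mult_right_mono exp_ge_add_one_self) auto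
    also have "\<dots> = s 0 * exp (\<Sum>i<Suc n. d i)" by (simp add: exp_add)
    finally show ?case .
  qed
  moreover have "exp (\<Sum>i<n. d i) \<le> exp (suminf d)"
    using sum_le_suminf[OF sd, of "{..<n}"] d0 by auto
  ultimately show ?thesis using s0[of 0] by (meson mult_left_mono order_trans)
qed

lemma prod_conv:
  fixes g s :: "nat \<Rightarrow> complex"
  assumes rec: "\<And>n. g (Suc n) = g n * (1 + s n)" and ss: "summable (\<lambda>n. norm (s n))"
  shows "convergent g"
proof -
  have b: "norm (g n) \<le> norm (g 0) * exp (suminf (\<lambda>n. norm (s n)))" for n
  proof (rule growth[where d="\<lambda>n. norm (s n)"])
    fix n show "norm (g (Suc n)) \<le> (1 + norm (s n)) * norm (g n)"
      unfolding rec by (metis mult.commute norm_mult norm_one norm_triangle_ineq mult_right_mono norm_ge_zero)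
  qed (auto simp: ss)
  define G where "G = norm (g 0) * exp (suminf (\<lambda>n. norm (s n)))"
  show ?thesis
  proof (rule conv_diff, rule summable_comparison_test')
    show "summable (\<lambda>n. G * norm (s n))" using ss by (rule summable_mult)
    fix n
    have "norm (g (Suc n) - g n) = norm (g n) * norm (s n)" unfolding rec by (simp add: algebra_simps norm_mult)
    also have "\<dots> \<le> G * norm (s n)" using b[of n] unfolding G_def by (intro mult_right_mono) auto
    finally show "norm (norm (g (Suc n) - g n)) \<le> G * norm (s n)" by simp
  qed
qed

lemma tail_facts:
  fixes A :: "nat \<Rightarrow> complex"
  assumes sA: "summable (\<lambda>k. A (Suc k))"
  defines "R \<equiv> \<lambda>k. (\<Sum>j. A (Suc k + j))"
  shows "R k = A (Suc k) + R (Suc k)" and "R \<longlonglongrightarrow> 0"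
proof -
  have sAk: "summable (\<lambda>j. A (Suc k + j))" for k
    using summable_ignore_initial_segment[OF sA, of k] by (simp add: add.commute)
  show "R k = A (Suc k) + R (Suc k)"
    using suminf_split_head[OF sAk[of k]] unfolding R_def by simp
  have "(\<lambda>k. \<Sum>j. (\<lambda>k. A (Suc k)) (j + k)) \<longlonglongrightarrow> 0" by (rule tail_lim[OF sA])
  thus "R \<longlonglongrightarrow> 0" unfolding R_def by (simp add: add.commute)
qed

lemma recur_conv:
  fixes p q A B :: "nat \<Rightarrow> complex"
  assumes p: "\<And>n. p (Suc n) = p n + A (Suc n) * q n"
    and q: "\<And>n. q (Suc n) = q n + B (Suc n) * p n"
    and sA: "summable (\<lambda>k. A (Suc k))" and sB: "summable (\<lambda>k. B (Suc k))"
    and sE: "summable (\<lambda>k. norm (B (Suc k) * (\<Sum>j. A (Suc k + j))))"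
    and sAB: "summable (\<lambda>k. norm (A (Suc k) * B (Suc k)))"
  shows "convergent p"
proof -
  define R where "R = (\<lambda>k. (\<Sum>j. A (Suc k + j)))"
  define R' where "R' = (\<lambda>k. (\<Sum>j. B (Suc k + j)))"
  have Rr: "R k = A (Suc k) + R (Suc k)" for k using tail_facts[OF sA] unfolding R_def by blast
  have R'r: "R' k = B (Suc k) + R' (Suc k)" for k using tail_facts[OF sB] unfolding R'_def by blast
  have R0: "R \<longlonglongrightarrow> 0" using tail_facts[OF sA] unfolding R_def by blast
  have R'0: "R' \<longlonglongrightarrow> 0" using tail_facts[OF sB] unfolding R'_def by blast
  obtain K1 where K1: "\<And>k. norm (R k) \<le> K1"
    using Bseq_eq_bounded[of R] convergent_imp_Bseq[OF convergentI[OF R0]] BseqE by metis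
  obtain K2 where K2: "\<And>k. norm (R' k) \<le> K2"
    using convergent_imp_Bseq[OF convergentI[OF R'0]] BseqE by metis
  define K where "K = max K1 K2"
  have KR: "norm (R k) \<le> K" and KR': "norm (R' k) \<le> K" for k
    using K1[of k] K2[of k] unfolding K_def by auto
  have K0: "0 \<le> K" using KR[of 0] norm_ge_zero[of "R 0"] by linarith
  define pt where "pt = (\<lambda>n. p n + R n * q n)"
  define qh where "qh = (\<lambda>n. q n + R' n * pt n)"
  define eps where "eps = (\<lambda>n. B (Suc n) * R (Suc n))"
  define eta where "eta = (\<lambda>n. B (Suc n) * R n)"
  have ptr: "pt (Suc n) = pt n + eps n * p n" for n
    unfolding pt_def eps_def p q using Rr[of n] by (simp add: algebra_simps)
  have qhr: "qh (Suc n) = qh n - eta n * q n + R' (Suc n) * (eps n * p n)" for n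
    unfolding qh_def ptr eta_def q using R'r[of n] by (simp add: pt_def algebra_simps)
  have qe: "q n = qh n - R' n * pt n" for n unfolding qh_def by simp
  have pe: "p n = pt n - R n * q n" for n unfolding pt_def by simp
  define s where "s = (\<lambda>n. norm (pt n) + norm (qh n))"
  have qb: "norm (q n) \<le> (1 + K) * s n" for n
  proof -
    have "norm (q n) \<le> norm (qh n) + norm (R' n) * norm (pt n)"
      unfolding qe by (metis norm_mult norm_triangle_ineq4)
    also have "\<dots> \<le> norm (qh n) + K * norm (pt n)"
      using KR'[of n] by (intro add_left_mono mult_right_mono) auto
    also have "\<dots> \<le> (1 + K) * s n" unfolding s_def using K0 by (simp add: algebra_simps)
    finally show ?thesis .
  qed
  have pb: "norm (p n) \<le> (1 + K)^2 * s n" for n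
  proof -
    have "norm (p n) \<le> norm (pt n) + norm (R n) * norm (q n)"
      unfolding pe by (metis norm_mult norm_triangle_ineq4)
    also have "\<dots> \<le> norm (pt n) + K * ((1 + K) * s n)"
      using KR[of n] qb[of n] K0 by (intro add_left_mono mult_mono) auto
    also have "\<dots> \<le> (1 + K)^2 * s n" unfolding s_def using K0
      by (simp add: algebra_simps power2_eq_square)
    finally show ?thesis .
  qed
  have s0: "0 \<le> s n" for n unfolding s_def by simp
  have seta: "summable (\<lambda>n. norm (eta n))" using sE unfolding eta_def R_def .
  have seps: "summable (\<lambda>n. norm (eps n))"
  proof (rule summable_comparison_test')
    show "summable (\<lambda>n. norm (eta n) + norm (A (Suc n) * B (Suc n)))"
      by (intro summable_add seta sAB)
    fix n
    have "eps n = eta n - A (Suc n) * B (Suc n)" unfolding eps_def eta_def using Rr[of n]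
      by (simp add: algebra_simps)
    thus "norm (norm (eps n)) \<le> norm (eta n) + norm (A (Suc n) * B (Suc n))"
      by (simp add: norm_triangle_ineq4)
  qed
  define d where "d = (\<lambda>n. (norm (eps n) + norm (eta n)) * (1 + K)^3)"
  have sd: "summable d" unfolding d_def by (intro summable_mult2 summable_add seps seta)
  have d0: "0 \<le> d n" for n unfolding d_def using K0 by simp
  have srec: "s (Suc n) \<le> (1 + d n) * s n" for n
  proof -
    have e1: "norm (pt (Suc n)) \<le> norm (pt n) + norm (eps n) * ((1 + K)^2 * s n)"
    proof -
      have "norm (pt (Suc n)) \<le> norm (pt n) + norm (eps n * p n)" unfolding ptr by (rule norm_triangle_ineq)
      also have "norm (eps n * p n) \<le> norm (eps n) * ((1 + K)^2 * s n)"
        unfolding norm_mult using pb[of n] by (intro mult_left_mono) auto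
      finally show ?thesis by simp
    qed
    have e2: "norm (qh (Suc n)) \<le> norm (qh n) + norm (eta n) * ((1 + K) * s n)
        + K * (norm (eps n) * ((1 + K)^2 * s n))"
    proof -
      have "norm (qh (Suc n)) \<le> norm (qh n) + norm (eta n * q n) + norm (R' (Suc n) * (eps n * p n))"
        unfolding qhr by (smt (verit) norm_triangle_ineq norm_triangle_ineq4)
      also have "norm (eta n * q n) \<le> norm (eta n) * ((1 + K) * s n)"
        unfolding norm_mult using qb[of n] by (intro mult_left_mono) auto
      also have "norm (R' (Suc n) * (eps n * p n)) \<le> K * (norm (eps n) * ((1 + K)^2 * s n))"
        unfolding norm_mult using KR'[of "Suc n"] pb[of n] K0
        by (intro mult_mono mult_left_mono) auto
      finally show ?thesis by simp
    qed
    have "s (Suc n) \<le> s n + norm (eps n) * ((1 + K)^2 * s n) + norm (eta n) * ((1 + K) * s n)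
        + K * (norm (eps n) * ((1 + K)^2 * s n))" using e1 e2 unfolding s_def by simp
    also have "\<dots> = s n + (norm (eps n) * (1 + K)^2 * (1 + K) + norm (eta n) * (1 + K)) * s n"
      by (simp add: algebra_simps)
    also have "\<dots> \<le> s n + d n * s n"
    proof -
      have "norm (eta n) * (1 + K) \<le> norm (eta n) * (1 + K)^3"
      proof (intro mult_left_mono)
        have "1 * 1 \<le> (1 + K) * (1 + K)" using K0 by (intro mult_mono) auto
        hence "1 * (1 + K) \<le> ((1 + K) * (1 + K)) * (1 + K)" using K0 by (intro mult_right_mono) auto
        thus "1 + K \<le> (1 + K)^3" by (simp add: power3_eq_cube)
      qed auto
      hence "norm (eps n) * (1 + K)^2 * (1 + K) + norm (eta n) * (1 + K) \<le> d n"
        unfolding d_def by (simp add: algebra_simps power3_eq_cube power2_eq_square)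
      thus ?thesis using s0[of n] by (intro add_left_mono mult_right_mono) auto
    qed
    finally show ?thesis by (simp add: algebra_simps)
  qed
  define S where "S = s 0 * exp (suminf d)"
  have sS: "s n \<le> S" for n unfolding S_def by (rule growth[OF s0 d0 sd srec])
  have cpt: "convergent pt"
  proof (rule conv_diff, rule summable_comparison_test')
    show "summable (\<lambda>n. norm (eps n) * ((1 + K)^2 * S))" by (intro summable_mult2 seps)
    fix n
    have "norm (p n) \<le> (1 + K)^2 * S" using pb[of n] sS[of n] K0
      by (meson order_trans mult_left_mono zero_le_power add_nonneg_nonneg zero_le_one)
    thus "norm (norm (pt (Suc n) - pt n)) \<le> norm (eps n) * ((1 + K)^2 * S)"
      unfolding ptr by (simp add: norm_mult mult_left_mono)
  qed
  have cqh: "convergent qh"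
  proof (rule conv_diff, rule summable_comparison_test')
    show "summable (\<lambda>n. norm (eta n) * ((1 + K) * S) + K * (norm (eps n) * ((1 + K)^2 * S)))"
      by (intro summable_add summable_mult2 summable_mult seps seta)
    fix n
    have a1: "norm (q n) \<le> (1 + K) * S" using qb[of n] sS[of n] K0
      by (meson order_trans mult_left_mono add_nonneg_nonneg zero_le_one)
    have a2: "norm (p n) \<le> (1 + K)^2 * S" using pb[of n] sS[of n] K0
      by (meson order_trans mult_left_mono zero_le_power add_nonneg_nonneg zero_le_one)
    have "qh (Suc n) - qh n = - (eta n * q n) + R' (Suc n) * (eps n * p n)" unfolding qhr by simp
    hence "norm (qh (Suc n) - qh n) \<le> norm (- (eta n * q n)) + norm (R' (Suc n) * (eps n * p n))"
      by (metis norm_triangle_ineq)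
    hence "norm (qh (Suc n) - qh n) \<le> norm (eta n * q n) + norm (R' (Suc n) * (eps n * p n))"
      by simp
    also have "\<dots> \<le> norm (eta n) * ((1 + K) * S) + K * (norm (eps n) * ((1 + K)^2 * S))"
      unfolding norm_mult using a1 a2 KR'[of "Suc n"] K0
      by (intro add_mono mult_mono mult_left_mono) auto
    finally show "norm (norm (qh (Suc n) - qh n)) \<le> norm (eta n) * ((1 + K) * S) + K * (norm (eps n) * ((1 + K)^2 * S))"
      by simp
  qed
  obtain Lp where Lp: "pt \<longlonglongrightarrow> Lp" using cpt by (auto simp: convergent_def)
  obtain Lq where Lq: "qh \<longlonglongrightarrow> Lq" using cqh by (auto simp: convergent_def)
  have "(\<lambda>n. pt n - R n * (qh n - R' n * pt n)) \<longlonglongrightarrow> Lp - 0 * (Lq - 0 * Lp)"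
    by (intro tendsto_intros Lp Lq R0 R'0)
  moreover have "(\<lambda>n. pt n - R n * (qh n - R' n * pt n)) = p" using pe qe by (auto simp: fun_eq_iff)
  ultimately show ?thesis by (auto simp: convergent_def)
qed



definition MT :: "(int \<Rightarrow> complex) \<Rightarrow> nat \<Rightarrow> complex mat" where
  "MT c n = mat n n (\<lambda>(i,j). c (int j - int i))"
definition DD :: "(int \<Rightarrow> complex) \<Rightarrow> nat \<Rightarrow> complex" where
  "DD c n = det (MT c n)"
definition xx :: "(int \<Rightarrow> complex) \<Rightarrow> nat \<Rightarrow> nat \<Rightarrow> complex" where
  "xx c n j = cofactor (MT c (Suc n)) n j / DD c (Suc n)"
definition ll :: "(int \<Rightarrow> complex) \<Rightarrow> nat \<Rightarrow> complex" where
  "ll c n = DD c (Suc n) / DD c n"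
definition aa :: "(int \<Rightarrow> complex) \<Rightarrow> nat \<Rightarrow> nat \<Rightarrow> complex" where
  "aa c n j = ll c n * xx c n j"
definition rv :: "(int \<Rightarrow> complex) \<Rightarrow> int \<Rightarrow> complex" where
  "rv c = (\<lambda>k. c (- k))"

lemma rv_rv[simp]: "rv (rv c) = c" unfolding rv_def by simp

lemma MT_carrier[simp]: "MT c n \<in> carrier_mat n n" unfolding MT_def by simp

lemma adj_row:
  fixes A :: "'a :: comm_ring_1 mat"
  assumes A: "A \<in> carrier_mat n n" and i: "i < n" and j: "j < n"
  shows "(\<Sum>k<n. A $$ (i,k) * cofactor A j k) = (if i = j then det A else 0)"
proof -
  have "(A * adj_mat A) $$ (i,j) = (det A \<cdot>\<^sub>m 1\<^sub>m n) $$ (i,j)" using adj_mat(2)[OF A] by simp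
  moreover have "(A * adj_mat A) $$ (i,j) = (\<Sum>k<n. A $$ (i,k) * cofactor A j k)"
    using A i j by (simp add: scalar_prod_def adj_mat_def atLeast0LessThan)
  moreover have "(det A \<cdot>\<^sub>m 1\<^sub>m n) $$ (i,j) = (if i = j then det A else 0)" using i j by simp
  ultimately show ?thesis by simp
qed

lemma adj_col:
  fixes A :: "'a :: comm_ring_1 mat"
  assumes A: "A \<in> carrier_mat n n" and i: "i < n" and j: "j < n"
  shows "(\<Sum>k<n. cofactor A k i * A $$ (k,j)) = (if i = j then det A else 0)"
proof -
  have "(adj_mat A * A) $$ (i,j) = (det A \<cdot>\<^sub>m 1\<^sub>m n) $$ (i,j)" using adj_mat(3)[OF A] by simp
  moreover have "(adj_mat A * A) $$ (i,j) = (\<Sum>k<n. cofactor A k i * A $$ (k,j))"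
    using A i j by (simp add: scalar_prod_def adj_mat_def atLeast0LessThan)
  moreover have "(det A \<cdot>\<^sub>m 1\<^sub>m n) $$ (i,j) = (if i = j then det A else 0)" using i j by simp
  ultimately show ?thesis by simp
qed

lemma DD_rv: "DD (rv c) n = DD c n"
proof -
  have "MT (rv c) n = transpose_mat (MT c n)"
    by (rule eq_matI) (auto simp: MT_def rv_def)
  thus ?thesis unfolding DD_def using det_transpose[of "MT c n" n] by simp
qed

lemma DD0[simp]: "DD c 0 = 1" unfolding DD_def by (simp add: det_dim_zero)

lemma ll_rv: "ll (rv c) n = ll c n" unfolding ll_def DD_rv ..

lemma X1:
  assumes D: "DD c (Suc n) \<noteq> 0" and i: "i \<le> n"
  shows "(\<Sum>j<Suc n. c (int j - int i) * xx c n j) = (if i = n then 1 else 0)"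
proof -
  have e0: "(\<Sum>k<Suc n. MT c (Suc n) $$ (i,k) * cofactor (MT c (Suc n)) n k) = (if i = n then DD c (Suc n) else 0)"
    using adj_row[OF MT_carrier, of i "Suc n" n c] i unfolding DD_def by simp
  have e1: "(\<Sum>k<Suc n. MT c (Suc n) $$ (i,k) * cofactor (MT c (Suc n)) n k)
     = (\<Sum>k<Suc n. c (int k - int i) * cofactor (MT c (Suc n)) n k)"
    using i by (intro sum.cong) (auto simp: MT_def)
  have "(\<Sum>j<Suc n. c (int j - int i) * xx c n j) = (\<Sum>k<Suc n. c (int k - int i) * cofactor (MT c (Suc n)) n k) / DD c (Suc n)"
    unfolding xx_def by (simp add: sum_divide_distrib del: sum.lessThan_Suc)
  also have "\<dots> = (if i = n then DD c (Suc n) else 0) / DD c (Suc n)" using e0 e1 by simp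
  also have "\<dots> = (if i = n then 1 else 0)" using D by simp
  finally show ?thesis .
qed

lemma X2:
  assumes D: "DD c (Suc n) \<noteq> 0"
    and sys: "\<And>i. i \<le> n \<Longrightarrow> (\<Sum>k<Suc n. c (int k - int i) * v k) = (if i = n then lam else 0)"
    and j: "j \<le> n"
  shows "v j = lam * xx c n j"
proof -
  define A where "A = MT c (Suc n)"
  have Aik: "i < Suc n \<Longrightarrow> k < Suc n \<Longrightarrow> A $$ (i,k) = c (int k - int i)" for i k
    unfolding A_def MT_def by simp
  have "(\<Sum>i<Suc n. cofactor A i j * (\<Sum>k<Suc n. A $$ (i,k) * v k))
      = (\<Sum>i<Suc n. cofactor A i j * (if i = n then lam else 0))"
  proof (intro sum.cong refl)
    fix i assume i: "i \<in> {..<Suc n}"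
    have "(\<Sum>k<Suc n. A $$ (i,k) * v k) = (\<Sum>k<Suc n. c (int k - int i) * v k)"
      using i by (intro sum.cong) (auto simp: Aik)
    also have "\<dots> = (if i = n then lam else 0)" using i sys[of i] by simp
    finally show "cofactor A i j * (\<Sum>k<Suc n. A $$ (i,k) * v k) = cofactor A i j * (if i = n then lam else 0)" by simp
  qed
  also have "\<dots> = (\<Sum>i<Suc n. if i = n then cofactor A i j * lam else 0)"
    by (intro sum.cong) auto
  also have "\<dots> = cofactor A n j * lam" by (simp add: sum.delta)
  finally have e1: "(\<Sum>i<Suc n. cofactor A i j * (\<Sum>k<Suc n. A $$ (i,k) * v k)) = cofactor A n j * lam" .
  have "(\<Sum>i<Suc n. cofactor A i j * (\<Sum>k<Suc n. A $$ (i,k) * v k))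
      = (\<Sum>k<Suc n. (\<Sum>i<Suc n. cofactor A i j * A $$ (i,k)) * v k)"
    unfolding sum_distrib_left sum_distrib_right mult.assoc by (rule sum.swap)
  also have "\<dots> = (\<Sum>k<Suc n. (if j = k then det A else 0) * v k)"
  proof (intro sum.cong refl)
    fix k assume "k \<in> {..<Suc n}"
    thus "(\<Sum>i<Suc n. cofactor A i j * A $$ (i,k)) * v k = (if j = k then det A else 0) * v k"
      using j adj_col[of A "Suc n" j k] unfolding A_def by (simp del: sum.lessThan_Suc)
  qed
  also have "\<dots> = (\<Sum>k<Suc n. if j = k then det A * v k else 0)" by (intro sum.cong) auto
  also have "\<dots> = det A * v j" using j by (simp add: sum.delta' del: sum.lessThan_Suc)
  finally have "det A * v j = cofactor A n j * lam" using e1 by simp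
  thus ?thesis using D unfolding xx_def A_def DD_def by (simp add: field_simps)
qed

lemma del_nn: "mat_delete (MT c (Suc n)) n n = MT c n"
  by (rule eq_matI) (auto simp: mat_delete_def MT_def)

lemma del_n0: "mat_delete (MT c (Suc n)) n 0 = mat n n (\<lambda>(i,j). c (int j - int i + 1))"
  by (rule eq_matI) (auto simp: mat_delete_def MT_def algebra_simps)

lemma xx_nn: "xx c n n = DD c n / DD c (Suc n)"
  unfolding xx_def cofactor_def del_nn DD_def by (simp add: mult_2[symmetric])

lemma ll_nz: assumes H: "\<And>m. DD c m \<noteq> 0" shows "ll c n \<noteq> 0"
  unfolding ll_def using H by simp

lemma A1:
  assumes H: "\<And>m. DD c m \<noteq> 0" and i: "i \<le> n"
  shows "(\<Sum>j<Suc n. c (int j - int i) * aa c n j) = (if i = n then ll c n else 0)"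
proof -
  have "(\<Sum>j<Suc n. c (int j - int i) * aa c n j) = ll c n * (\<Sum>j<Suc n. c (int j - int i) * xx c n j)"
    unfolding aa_def sum_distrib_left by (intro sum.cong) auto
  also have "\<dots> = ll c n * (if i = n then 1 else 0)" using X1[OF H i] by simp
  finally show ?thesis by simp
qed

lemma A2: assumes H: "\<And>m. DD c m \<noteq> 0" shows "aa c n n = 1"
  unfolding aa_def ll_def xx_nn using H[of n] H[of "Suc n"] by simp

lemma RL:
  assumes H: "\<And>m. DD c m \<noteq> 0"
  shows "\<And>j. j \<le> Suc n \<Longrightarrow> aa c (Suc n) j = (if j = 0 then 0 else aa c n (j - 1))
            + aa c (Suc n) 0 * (if j \<le> n then aa (rv c) n (n - j) else 0)"
    and "ll c (Suc n) = ll c n + aa c (Suc n) 0 * (\<Sum>k<Suc n. c (- 1 - int k) * aa (rv c) n k)"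
    and "aa c (Suc n) 0 * ll c n = - (\<Sum>k<Suc n. c (int k + 1) * aa c n k)"
proof -
  have Hr: "\<And>m. DD (rv c) m \<noteq> 0" using H by (simp add: DD_rv)
  define L where "L = ll c n"
  have L0: "L \<noteq> 0" unfolding L_def by (rule ll_nz[OF H])
  define a where "a = aa c n"
  define b where "b = aa (rv c) n"
  define w where "w = (\<lambda>j. if j = 0 then 0 else a (j - 1))"
  define r where "r = (\<lambda>j. if j \<le> n then b (n - j) else 0)"
  define \<gamma> where "\<gamma> = (\<Sum>k<Suc n. c (int k + 1) * a k)"
  define \<gamma>' where "\<gamma>' = (\<Sum>k<Suc n. c (- 1 - int k) * b k)"
  have W: "(\<Sum>j<Suc (Suc n). c (int j - int i) * w j) = (if i = 0 then \<gamma> else if i = Suc n then L else 0)"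
    if i: "i \<le> Suc n" for i
  proof -
    have "(\<Sum>j<Suc (Suc n). c (int j - int i) * w j) = (\<Sum>j<Suc n. c (int (Suc j) - int i) * a j)"
      unfolding sum.lessThan_Suc_shift[of _ "Suc n"] w_def by simp
    also have "\<dots> = (if i = 0 then \<gamma> else if i = Suc n then L else 0)"
    proof (cases i)
      case 0 thus ?thesis unfolding \<gamma>_def by (simp add: add.commute)
    next
      case (Suc i')
      hence "(\<Sum>j<Suc n. c (int (Suc j) - int i) * a j) = (\<Sum>j<Suc n. c (int j - int i') * a j)" by simp
      also have "\<dots> = (if i' = n then L else 0)" unfolding a_def L_def using A1[OF H, of i' n] Suc i by simp
      finally show ?thesis using Suc by simp
    qed
    finally show ?thesis .
  qed
  have Rr: "(\<Sum>j<Suc (Suc n). c (int j - int i) * r j) = (if i = 0 then L else if i = Suc n then \<gamma>' else 0)"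
    if i: "i \<le> Suc n" for i
  proof -
    have "(\<Sum>j<Suc (Suc n). c (int j - int i) * r j) = (\<Sum>j<Suc n. c (int j - int i) * b (n - j))"
      unfolding r_def by (simp del: sum.lessThan_Suc add: sum.lessThan_Suc[of _ "Suc n"])
    also have "\<dots> = (\<Sum>j<Suc n. (\<lambda>k. c (int n - int k - int i) * b k) (n - j))"
      by (intro sum.cong) (auto simp: of_nat_diff)
    also have "\<dots> = (\<Sum>k<Suc n. c (int n - int k - int i) * b k)"
      using sum.nat_diff_reindex[of "\<lambda>k. c (int n - int k - int i) * b k" "Suc n"] by simp
    also have "\<dots> = (if i = 0 then L else if i = Suc n then \<gamma>' else 0)"
    proof (cases "i = Suc n")
      case True
      hence "(\<Sum>k<Suc n. c (int n - int k - int i) * b k) = \<gamma>'" unfolding \<gamma>'_def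
        by (intro sum.cong) (auto simp: algebra_simps)
      thus ?thesis using True by simp
    next
      case False
      hence i': "i \<le> n" using i by simp
      have "(\<Sum>k<Suc n. c (int n - int k - int i) * b k) = (\<Sum>k<Suc n. rv c (int k - int (n - i)) * b k)"
        using i' by (intro sum.cong) (auto simp: rv_def of_nat_diff algebra_simps)
      also have "\<dots> = (if n - i = n then ll (rv c) n else 0)" unfolding b_def
        by (rule A1[OF Hr]) simp
      finally show ?thesis using False i' by (auto simp: ll_rv L_def)
    qed
    finally show ?thesis .
  qed
  define t where "t = \<gamma> / L"
  define v where "v = (\<lambda>j. w j - t * r j)"
  have V: "(\<Sum>k<Suc (Suc n). c (int k - int i) * v k) = (if i = Suc n then L - t * \<gamma>' else 0)"
    if i: "i \<le> Suc n" for i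
  proof -
    have "(\<Sum>k<Suc (Suc n). c (int k - int i) * v k)
       = (\<Sum>k<Suc (Suc n). c (int k - int i) * w k) - t * (\<Sum>k<Suc (Suc n). c (int k - int i) * r k)"
      unfolding v_def sum_distrib_left sum_subtractf[symmetric] by (intro sum.cong) (auto simp: algebra_simps)
    also have "\<dots> = (if i = Suc n then L - t * \<gamma>' else 0)"
      unfolding W[OF i] Rr[OF i] using L0 by (auto simp: t_def)
    finally show ?thesis .
  qed
  have vx: "v j = (L - t * \<gamma>') * xx c (Suc n) j" if j: "j \<le> Suc n" for j
    by (rule X2[OF H V j]) 
  have "1 = (L - t * \<gamma>') * xx c (Suc n) (Suc n)"
    using vx[of "Suc n"] A2[OF H, of n] by (simp add: v_def w_def r_def a_def)
  hence lam: "L - t * \<gamma>' = ll c (Suc n)"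
    unfolding xx_nn ll_def using H[of "Suc n"] H[of "Suc (Suc n)"] by (simp add: field_simps)
  have av: "aa c (Suc n) j = v j" if "j \<le> Suc n" for j
    unfolding aa_def vx[OF that] lam ..
  have a0: "aa c (Suc n) 0 = - t"
    using av[of 0] A2[OF Hr, of n] by (simp add: v_def w_def r_def b_def)
  show "\<And>j. j \<le> Suc n \<Longrightarrow> aa c (Suc n) j = (if j = 0 then 0 else aa c n (j - 1))
            + aa c (Suc n) 0 * (if j \<le> n then aa (rv c) n (n - j) else 0)"
  proof -
    fix j assume j: "j \<le> Suc n"
    have "aa c (Suc n) j = w j + (- t) * r j" using av[OF j] by (simp add: v_def)
    thus "aa c (Suc n) j = (if j = 0 then 0 else aa c n (j - 1))
            + aa c (Suc n) 0 * (if j \<le> n then aa (rv c) n (n - j) else 0)"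
      unfolding a0[symmetric] w_def r_def a_def b_def .
  qed
  show "ll c (Suc n) = ll c n + aa c (Suc n) 0 * (\<Sum>k<Suc n. c (- 1 - int k) * aa (rv c) n k)"
    using lam a0 unfolding \<gamma>'_def b_def L_def by simp
  show "aa c (Suc n) 0 * ll c n = - (\<Sum>k<Suc n. c (int k + 1) * aa c n k)"
    using a0 L0 unfolding t_def \<gamma>_def a_def L_def by simp
qed

lemma ll_rec:
  assumes H: "\<And>m. DD c m \<noteq> 0"
  shows "ll c (Suc n) = ll c n * (1 - aa c (Suc n) 0 * aa (rv c) (Suc n) 0)"
proof -
  have Hr: "\<And>m. DD (rv c) m \<noteq> 0" using H by (simp add: DD_rv)
  have e: "aa (rv c) (Suc n) 0 * ll c n = - (\<Sum>k<Suc n. c (- 1 - int k) * aa (rv c) n k)"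
    using RL(3)[OF Hr, of n, unfolded ll_rv] by (simp add: rv_def algebra_simps)
  define G where "G = (\<Sum>k<Suc n. c (- 1 - int k) * aa (rv c) n k)"
  have "ll c (Suc n) = ll c n + aa c (Suc n) 0 * G" using RL(2)[OF H, of n] unfolding G_def .
  moreover have "G = - (aa (rv c) (Suc n) 0 * ll c n)" using e unfolding G_def by simp
  ultimately show ?thesis by (simp add: algebra_simps)
qed

definition PP :: "(int \<Rightarrow> complex) \<Rightarrow> complex \<Rightarrow> nat \<Rightarrow> complex" where
  "PP c z n = (\<Sum>j<Suc n. aa c n j * z ^ (n - j))"

lemma PP0: assumes H: "\<And>m. DD c m \<noteq> 0" shows "PP c z 0 = 1"
  unfolding PP_def using A2[OF H, of 0] by simp

lemma PP_rec:
  assumes H: "\<And>m. DD c m \<noteq> 0" and z: "z \<noteq> 0"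
  shows "PP c z (Suc n) = PP c z n + aa c (Suc n) 0 * z ^ Suc n * PP (rv c) (inverse z) n"
proof -
  define a where "a = aa c n"
  define b where "b = aa (rv c) n"
  define al where "al = aa c (Suc n) 0"
  define w where "w = (\<lambda>j. if j = 0 then 0 else a (j - 1))"
  define r where "r = (\<lambda>j. if j \<le> n then b (n - j) else 0)"
  have "PP c z (Suc n) = (\<Sum>j<Suc (Suc n). (w j + al * r j) * z ^ (Suc n - j))"
    unfolding PP_def w_def r_def a_def b_def al_def
    by (intro sum.cong refl) (subst RL(1)[OF H], auto)
  also have "\<dots> = (\<Sum>j<Suc (Suc n). w j * z ^ (Suc n - j)) + al * (\<Sum>j<Suc (Suc n). r j * z ^ (Suc n - j))"
    by (simp add: algebra_simps sum.distrib sum_distrib_left del: sum.lessThan_Suc)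
  also have "(\<Sum>j<Suc (Suc n). w j * z ^ (Suc n - j)) = PP c z n"
    unfolding sum.lessThan_Suc_shift[of _ "Suc n"] w_def PP_def a_def by simp
  also have "(\<Sum>j<Suc (Suc n). r j * z ^ (Suc n - j)) = (\<Sum>j<Suc n. b (n - j) * z ^ (Suc n - j))"
    unfolding r_def by (simp del: sum.lessThan_Suc add: sum.lessThan_Suc[of _ "Suc n"])
  also have "\<dots> = (\<Sum>j<Suc n. (\<lambda>k. b k * z ^ Suc k) (n - j))"
    by (intro sum.cong) (auto simp: Suc_diff_le)
  also have "\<dots> = (\<Sum>k<Suc n. b k * z ^ Suc k)"
    using sum.nat_diff_reindex[of "\<lambda>k. b k * z ^ Suc k" "Suc n"] by simp
  also have "\<dots> = z ^ Suc n * PP (rv c) (inverse z) n"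
    unfolding PP_def sum_distrib_left b_def
  proof (intro sum.cong refl)
    fix k assume "k \<in> {..<Suc n}"
    hence k: "k \<le> n" by simp
    have "z ^ Suc n = z ^ Suc k * z ^ (n - k)" using k by (simp flip: power_add)
    thus "aa (rv c) n k * z ^ Suc k = z ^ Suc n * (aa (rv c) n k * inverse z ^ (n - k))"
      using z by (simp add: power_inverse field_simps)
  qed
  finally show ?thesis unfolding al_def by (simp add: algebra_simps)
qed



lemma pw_meas: "(\<lambda>\<zeta>::complex. \<zeta> powi m) \<in> borel_measurable borel"
proof (cases "m \<ge> 0")
  case True
  hence "(\<lambda>\<zeta>::complex. \<zeta> powi m) = (\<lambda>\<zeta>. \<zeta> ^ nat m)" by (auto simp: power_int_def)
  thus ?thesis by simp
next
  case False
  hence "(\<lambda>\<zeta>::complex. \<zeta> powi m) = (\<lambda>\<zeta>. inverse \<zeta> ^ nat (-m))" by (auto simp: power_int_def)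
  thus ?thesis by simp
qed

lemma moment_shift:
  assumes mu: "cmeasure_on_circle \<nu> h"
    and eq: "\<And>\<zeta>. \<zeta> \<noteq> 0 \<Longrightarrow> \<zeta> powi (-k) * g \<zeta> = \<zeta> powi (-k') * h \<zeta>"
    and gm: "g \<in> borel_measurable borel"
  shows "moment \<nu> g k = moment \<nu> h k'"
proof -
  have sets: "sets \<nu> = sets borel" and n0: "emeasure \<nu> (- sphere 0 1) = 0" and ih: "integrable \<nu> h"
    using mu unfolding cmeasure_on_circle_def by auto
  have mc: "borel_measurable \<nu> = borel_measurable borel" by (rule measurable_cong_sets[OF sets refl])
  have hm: "h \<in> borel_measurable \<nu>" using ih by (rule borel_measurable_integrable)
  have AE: "AE \<zeta> in \<nu>. \<zeta> \<noteq> 0"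
  proof (rule AE_I'[of "- sphere 0 1"])
    show "- sphere (0::complex) 1 \<in> null_sets \<nu>"
      using n0 sets by (auto intro!: null_setsI borel_open simp: closed_sphere open_Compl)
  qed auto
  show ?thesis unfolding moment_def
  proof (rule integral_cong_AE)
    show "(\<lambda>\<zeta>. \<zeta> powi - k * g \<zeta>) \<in> borel_measurable \<nu>"
      unfolding mc using gm pw_meas[of "-k"] by (intro borel_measurable_times) auto
    show "(\<lambda>\<zeta>. \<zeta> powi - k' * h \<zeta>) \<in> borel_measurable \<nu>"
      using hm pw_meas[of "-k'"] unfolding mc by (intro borel_measurable_times) auto
    show "AE \<zeta> in \<nu>. \<zeta> powi - k * g \<zeta> = \<zeta> powi - k' * h \<zeta>" using AE by eventually_elim (rule eq)
  qed
qed



lemma Dn_DD: "Dn \<nu> h m = DD (moment \<nu> h) m"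
proof -
  have "mat m m (\<lambda>(i,j). moment \<nu> h (int i - int j)) = MT (rv (moment \<nu> h)) m"
    by (rule eq_matI) (auto simp: MT_def rv_def)
  hence "Dn \<nu> h m = DD (rv (moment \<nu> h)) m" unfolding Dn_def toeplitz_det_def DD_def by simp
  thus ?thesis by (simp add: DD_rv)
qed

lemma u_PP:
  assumes H: "\<And>m. DD (moment \<nu> h) m \<noteq> 0"
  shows "u_poly \<nu> h n z = PP (moment \<nu> h) z n / ll (moment \<nu> h) n"
proof -
  define c where "c = moment \<nu> h"
  define Am where "Am = mat (n+1) (n+1) (\<lambda>(i,j). if i < n then moment \<nu> h (int j - int i) else z ^ (n - j))"
  have cof: "cofactor Am n j = cofactor (MT c (Suc n)) n j" for j
  proof -
    have "mat_delete Am n j = mat_delete (MT c (Suc n)) n j"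
      by (rule eq_matI) (auto simp: mat_delete_def MT_def Am_def c_def)
    thus ?thesis unfolding cofactor_def by simp
  qed
  have "det Am = (\<Sum>j<Suc n. Am $$ (n,j) * cofactor Am n j)"
    by (rule laplace_expansion_row) (auto simp: Am_def)
  also have "\<dots> = (\<Sum>j<Suc n. z ^ (n - j) * cofactor (MT c (Suc n)) n j)"
  proof (intro sum.cong refl)
    fix j assume j: "j \<in> {..<Suc n}"
    have "Am $$ (n,j) = z ^ (n - j)" using j by (simp add: Am_def)
    thus "Am $$ (n,j) * cofactor Am n j = z ^ (n - j) * cofactor (MT c (Suc n)) n j" by (simp only: cof)
  qed
  finally have dA: "det Am = (\<Sum>j<Suc n. z ^ (n - j) * cofactor (MT c (Suc n)) n j)" .
  have l0: "ll c n \<noteq> 0" using ll_nz[OF H] unfolding c_def .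
  have "u_poly \<nu> h n z = det Am / Dn \<nu> h (n+1)" unfolding u_poly_def Am_def ..
  also have "\<dots> = (\<Sum>j<Suc n. z ^ (n - j) * xx c n j)"
    unfolding dA Dn_DD c_def[symmetric] xx_def
    by (simp add: sum_divide_distrib del: sum.lessThan_Suc)
  also have "\<dots> = PP c z n / ll c n"
    unfolding PP_def aa_def sum_divide_distrib using l0 by (intro sum.cong) auto
  finally show ?thesis unfolding c_def .
qed

lemma pwneg: "(z::complex) powi (- int m) = inverse z ^ m"
  by (simp add: power_int_minus power_inverse)

lemma v_PP:
  assumes H: "\<And>m. DD (moment \<nu> h) m \<noteq> 0"
  shows "v_poly \<nu> h n z = PP (rv (moment \<nu> h)) (inverse z) n / ll (moment \<nu> h) n"
proof -
  define c where "c = rv (moment \<nu> h)"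
  define Bm where "Bm = mat (n+1) (n+1) (\<lambda>(i,j). if i < n then moment \<nu> h (int i - int j) else z powi (int j - int n))"
  have cof: "cofactor Bm n j = cofactor (MT c (Suc n)) n j" for j
  proof -
    have "mat_delete Bm n j = mat_delete (MT c (Suc n)) n j"
      by (rule eq_matI) (auto simp: mat_delete_def MT_def Bm_def c_def rv_def)
    thus ?thesis unfolding cofactor_def by simp
  qed
  have "det Bm = (\<Sum>j<Suc n. Bm $$ (n,j) * cofactor Bm n j)"
    by (rule laplace_expansion_row) (auto simp: Bm_def)
  also have "\<dots> = (\<Sum>j<Suc n. inverse z ^ (n - j) * cofactor (MT c (Suc n)) n j)"
  proof (intro sum.cong refl)
    fix j assume "j \<in> {..<Suc n}"
    hence "int j - int n = - int (n - j)" by auto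
    thus "Bm $$ (n,j) * cofactor Bm n j = inverse z ^ (n - j) * cofactor (MT c (Suc n)) n j"
    proof -
      have "Bm $$ (n,j) = z powi (int j - int n)" using \<open>j \<in> _\<close> by (simp add: Bm_def)
      also have "\<dots> = inverse z ^ (n - j)" unfolding \<open>int j - int n = _\<close> pwneg ..
      finally have "Bm $$ (n,j) = inverse z ^ (n - j)" .
      thus ?thesis by (simp only: cof)
    qed
  qed
  finally have dB: "det Bm = (\<Sum>j<Suc n. inverse z ^ (n - j) * cofactor (MT c (Suc n)) n j)" .
  have l0: "ll c n \<noteq> 0" using ll_nz[of c] H unfolding c_def by (simp add: DD_rv)
  have DDe: "Dn \<nu> h (n+1) = DD c (Suc n)" unfolding Dn_DD c_def DD_rv by simp
  have "v_poly \<nu> h n z = det Bm / Dn \<nu> h (n+1)" unfolding v_poly_def Bm_def ..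
  also have "\<dots> = (\<Sum>j<Suc n. inverse z ^ (n - j) * xx c n j)"
    unfolding dB DDe xx_def
    by (simp add: sum_divide_distrib del: sum.lessThan_Suc)
  also have "\<dots> = PP c (inverse z) n / ll c n"
    unfolding PP_def aa_def sum_divide_distrib using l0 by (intro sum.cong) auto
  finally show ?thesis unfolding c_def ll_rv .
qed

lemma aa0:
  assumes H: "\<And>m. DD c m \<noteq> 0"
  shows "aa c n 0 = (-1)^n * det (mat n n (\<lambda>(i,j). c (int j - int i + 1))) / DD c n"
  unfolding aa_def ll_def xx_def cofactor_def del_n0 using H[of n] H[of "Suc n"] by simp

lemma h_meas: assumes mu: "cmeasure_on_circle \<nu> h" shows "h \<in> borel_measurable borel"
proof -
  have sets: "sets \<nu> = sets borel" and ih: "integrable \<nu> h"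
    using mu unfolding cmeasure_on_circle_def by auto
  have "h \<in> borel_measurable \<nu>" using ih by (rule borel_measurable_integrable)
  moreover have eq: "borel_measurable \<nu> = borel_measurable borel" by (rule measurable_cong_sets[OF sets refl])
  ultimately show ?thesis by metis
qed

lemma alpha_aa:
  assumes mu: "cmeasure_on_circle \<nu> h" and H: "\<And>m. DD (moment \<nu> h) m \<noteq> 0"
  shows "baxter_alpha \<nu> h n = aa (moment \<nu> h) n 0"
proof -
  define c where "c = moment \<nu> h"
  have ms: "moment \<nu> (\<lambda>\<zeta>. inverse \<zeta> * h \<zeta>) k = c (k + 1)" for k
    unfolding c_def
  proof (rule moment_shift[OF mu])
    fix \<zeta> :: complex assume z: "\<zeta> \<noteq> 0"
    have "\<zeta> powi (- (k + 1)) = \<zeta> powi (-k) / \<zeta>" using power_int_diff[of \<zeta> "-k" 1] z by simp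
    thus "\<zeta> powi - k * (inverse \<zeta> * h \<zeta>) = \<zeta> powi - (k + 1) * h \<zeta>" by (simp add: field_simps)
  next
    show "(\<lambda>\<zeta>. inverse \<zeta> * h \<zeta>) \<in> borel_measurable borel"
      using h_meas[OF mu] by (intro borel_measurable_times borel_measurable_inverse) auto
  qed
  have "Dn \<nu> (\<lambda>\<zeta>. inverse \<zeta> * h \<zeta>) n = det (mat n n (\<lambda>(i,j). c (int i - int j + 1)))"
    unfolding Dn_def toeplitz_det_def ms ..
  also have "\<dots> = det (transpose_mat (mat n n (\<lambda>(i,j). c (int j - int i + 1))))"
    by (intro arg_cong[where f=det] eq_matI) auto
  also have "\<dots> = det (mat n n (\<lambda>(i,j). c (int j - int i + 1)))"
    by (rule det_transpose[of _ n]) simp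
  finally show ?thesis unfolding baxter_alpha_def aa0[OF H] Dn_DD c_def by simp
qed

lemma beta_aa:
  assumes mu: "cmeasure_on_circle \<nu> h" and H: "\<And>m. DD (moment \<nu> h) m \<noteq> 0"
  shows "baxter_beta \<nu> h n = aa (rv (moment \<nu> h)) n 0"
proof -
  define c where "c = moment \<nu> h"
  have Hr: "\<And>m. DD (rv c) m \<noteq> 0" using H unfolding c_def by (simp add: DD_rv)
  have ms: "moment \<nu> (\<lambda>\<zeta>. \<zeta> * h \<zeta>) k = c (k - 1)" for k
    unfolding c_def
  proof (rule moment_shift[OF mu])
    fix \<zeta> :: complex assume z: "\<zeta> \<noteq> 0"
    have "\<zeta> powi (- (k - 1)) = \<zeta> powi (-k) * \<zeta>" using power_int_add_1[of \<zeta> "-k"] z by simp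
    thus "\<zeta> powi - k * (\<zeta> * h \<zeta>) = \<zeta> powi - (k - 1) * h \<zeta>" by (simp add: field_simps)
  next
    show "(\<lambda>\<zeta>. \<zeta> * h \<zeta>) \<in> borel_measurable borel"
      using h_meas[OF mu] by (intro borel_measurable_times) auto
  qed
  have "Dn \<nu> (\<lambda>\<zeta>. \<zeta> * h \<zeta>) n = det (mat n n (\<lambda>(i,j). c (int i - int j - 1)))"
    unfolding Dn_def toeplitz_det_def ms ..
  also have "\<dots> = det (mat n n (\<lambda>(i,j). rv c (int j - int i + 1)))"
    by (intro arg_cong[where f=det] eq_matI) (auto simp: rv_def algebra_simps)
  finally have e: "Dn \<nu> (\<lambda>\<zeta>. \<zeta> * h \<zeta>) n = det (mat n n (\<lambda>(i,j). rv c (int j - int i + 1)))" .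
  have e2: "aa (rv c) n 0 = (-1)^n * det (mat n n (\<lambda>(i,j). rv c (int j - int i + 1))) / DD (rv c) n"
    by (rule aa0[OF Hr])
  show ?thesis unfolding baxter_beta_def e Dn_DD[of \<nu> h] c_def[symmetric] e2 DD_rv by simp
qed

lemma tail_eq:
  fixes f :: "nat \<Rightarrow> complex"
  assumes w: "norm w = 1" and s: "summable (\<lambda>j. f (k + 1 + j) * w ^ (j + 1))"
  shows "norm (\<Sum>j. f (Suc k + j) * w ^ (Suc k + j)) = norm (\<Sum>j. f (k + 1 + j) * w ^ (j + 1))"
proof -
  have "(\<Sum>j. f (Suc k + j) * w ^ (Suc k + j)) = (\<Sum>j. w ^ k * (f (k + 1 + j) * w ^ (j + 1)))"
    by (intro suminf_cong) (simp add: power_add algebra_simps)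
  also have "\<dots> = w ^ k * (\<Sum>j. f (k + 1 + j) * w ^ (j + 1))" by (rule suminf_mult[OF s])
  finally show ?thesis using w by (simp add: norm_mult norm_power)
qed

lemma prod_bound: "(x::real) \<ge> 0 \<Longrightarrow> y \<ge> 0 \<Longrightarrow> x * y \<le> x\<^sup>2 + y\<^sup>2"
proof -
  assume "x \<ge> 0" "y \<ge> 0"
  have "0 \<le> (x - y)\<^sup>2" by simp
  hence "2 * (x * y) \<le> x\<^sup>2 + y\<^sup>2" by (simp add: power2_diff)
  moreover have "0 \<le> x * y" using \<open>x \<ge> 0\<close> \<open>y \<ge> 0\<close> by simp
  ultimately show ?thesis by linarith
qed

theorem mainTheorem3:
  fixes \<nu> :: "complex measure" and h :: "complex \<Rightarrow> complex"
  assumes mu: "cmeasure_on_circle \<nu> h"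
    and D_nonzero: "\<And>n. n \<ge> 1 \<Longrightarrow> Dn \<nu> h n \<noteq> 0"
    and alpha_l2: "summable (\<lambda>n. (cmod (baxter_alpha \<nu> h n))\<^sup>2)"
    and beta_l2: "summable (\<lambda>n. (cmod (baxter_beta \<nu> h n))\<^sup>2)"
  shows "(\<forall>\<theta>::real. exp (\<i> * of_real \<theta>) \<in> set_E (baxter_alpha \<nu> h) (baxter_beta \<nu> h)
                       \<inter> set_M (baxter_alpha \<nu> h) (baxter_beta \<nu> h) \<longrightarrow>
           (\<exists>L. (\<lambda>n. u_poly \<nu> h n (exp (\<i> * of_real \<theta>))) \<longlonglongrightarrow> L))
       \<and> (\<forall>\<theta>::real. exp (\<i> * of_real \<theta>) \<in> set_E_tilde (baxter_alpha \<nu> h) (baxter_beta \<nu> h)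
                       \<inter> set_M (baxter_alpha \<nu> h) (baxter_beta \<nu> h) \<longrightarrow>
           (\<exists>L. (\<lambda>n. v_poly \<nu> h n (exp (\<i> * of_real \<theta>))) \<longlonglongrightarrow> L))"
proof -
  define c where "c = moment \<nu> h"
  have H: "DD c m \<noteq> 0" for m
  proof (cases "m = 0")
    case True thus ?thesis by simp
  next
    case False thus ?thesis using D_nonzero[of m] unfolding c_def Dn_DD by simp
  qed
  have Hr: "DD (rv c) m \<noteq> 0" for m using H by (simp add: DD_rv)
  define \<alpha> where "\<alpha> = (\<lambda>n. aa c n 0)"
  define \<beta> where "\<beta> = (\<lambda>n. aa (rv c) n 0)"
  have al: "baxter_alpha \<nu> h = \<alpha>" unfolding \<alpha>_def c_def using alpha_aa[OF mu] H c_def by auto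
  have be: "baxter_beta \<nu> h = \<beta>" unfolding \<beta>_def c_def using beta_aa[OF mu] H c_def by auto
  have sab: "summable (\<lambda>n. norm (\<alpha> (Suc n)) * norm (\<beta> (Suc n)))"
  proof (rule summable_comparison_test')
    show "summable (\<lambda>n. (norm (\<alpha> (Suc n)))\<^sup>2 + (norm (\<beta> (Suc n)))\<^sup>2)"
    proof (intro summable_add)
      show "summable (\<lambda>n. (norm (\<alpha> (Suc n)))\<^sup>2)"
        using summable_Suc_iff[where f="\<lambda>n. (cmod (\<alpha> n))\<^sup>2"] alpha_l2 unfolding al by simp
      show "summable (\<lambda>n. (norm (\<beta> (Suc n)))\<^sup>2)"
        using summable_Suc_iff[where f="\<lambda>n. (cmod (\<beta> n))\<^sup>2"] beta_l2 unfolding be by simp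
    qed
    fix n show "norm (norm (\<alpha> (Suc n)) * norm (\<beta> (Suc n))) \<le> (norm (\<alpha> (Suc n)))\<^sup>2 + (norm (\<beta> (Suc n)))\<^sup>2"
      by (simp add: prod_bound)
  qed
  define t where "t = (\<lambda>n. \<alpha> n * \<beta> n)"
  have llr: "ll c (Suc n) = ll c n * (1 - t (Suc n))" for n
    unfolding t_def \<alpha>_def \<beta>_def by (rule ll_rec[OF H])
  have tnz: "1 - t (Suc n) \<noteq> 0" for n using llr[of n] ll_nz[of c "Suc n", OF H] by auto
  define s where "s = (\<lambda>n. inverse (1 - t (Suc n)) - 1)"
  have cg: "convergent (\<lambda>n. inverse (ll c n))"
  proof (rule prod_conv[where s = s])
    fix n show "inverse (ll c (Suc n)) = inverse (ll c n) * (1 + s n)"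
      unfolding llr s_def by (simp add: inverse_mult_distrib)
  next
    have st: "summable (\<lambda>n. norm (t (Suc n)))" using sab unfolding t_def by (simp add: norm_mult)
    have "(\<lambda>n. norm (t (Suc n))) \<longlonglongrightarrow> 0" by (rule summable_LIMSEQ_zero[OF st])
    hence ev: "eventually (\<lambda>n. norm (t (Suc n)) < 1/2) sequentially"
      by (rule order_tendstoD) simp
    show "summable (\<lambda>n. norm (s n))"
    proof (rule summable_comparison_test_ev)
      show "summable (\<lambda>n. 2 * norm (t (Suc n)))" using st by (rule summable_mult)
      show "eventually (\<lambda>n. norm (norm (s n)) \<le> 2 * norm (t (Suc n))) sequentially"
        using ev
      proof eventually_elim
        case (elim n)
        define x where "x = t (Suc n)"
        have x: "norm x < 1/2" using elim unfolding x_def .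
        have "1 - norm x \<le> norm (1 - x)" by (metis norm_one norm_triangle_ineq2)
        hence n1: "1/2 \<le> norm (1 - x)" using x by simp
        have nz: "1 - x \<noteq> 0" using n1 by auto
        have "s n = x / (1 - x)" unfolding s_def x_def[symmetric] using nz by (simp add: field_simps)
        hence "norm (s n) = norm x / norm (1 - x)" by (simp add: norm_divide)
        also have "\<dots> \<le> norm x / (1/2)" using n1 by (intro divide_left_mono) auto
        finally show ?case unfolding x_def by simp
      qed
    qed
  qed
  obtain Lg where Lg: "(\<lambda>n. inverse (ll c n)) \<longlonglongrightarrow> Lg" using cg by (auto simp: convergent_def)
  have ez: "norm (exp (\<i> * of_real \<theta>)) = 1" for \<theta> :: real by (rule norm_exp_i_times)
  have common: "(z \<in> set_E \<alpha> \<beta> \<longrightarrow> convergent (\<lambda>n. PP c z n)) \<and>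
     (z \<in> set_E_tilde \<alpha> \<beta> \<longrightarrow> convergent (\<lambda>n. PP (rv c) (inverse z) n))"
    if z1: "norm z = 1" and M: "z \<in> set_M \<alpha> \<beta>" for z
  proof -
    have z0: "z \<noteq> 0" using z1 by auto
    define A where "A = (\<lambda>k. \<alpha> k * z ^ k)"
    define B where "B = (\<lambda>k. \<beta> k * inverse z ^ k)"
    define p where "p = (\<lambda>n. PP c z n)"
    define q where "q = (\<lambda>n. PP (rv c) (inverse z) n)"
    have pr: "p (Suc n) = p n + A (Suc n) * q n" for n
      unfolding p_def q_def A_def \<alpha>_def using PP_rec[OF H z0, of n] by (simp add: algebra_simps)
    have qr: "q (Suc n) = q n + B (Suc n) * p n" for n
      unfolding p_def q_def B_def \<beta>_def using PP_rec[OF Hr, of "inverse z" n] z0 by (simp add: algebra_simps)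
    have sA: "summable (\<lambda>k. A (Suc k))" using M unfolding set_M_def A_def by simp
    have sB: "summable (\<lambda>k. B (Suc k))" using M unfolding set_M_def B_def
      by (simp add: pwneg[of z "Suc _", simplified])
    have sAB: "summable (\<lambda>k. norm (A (Suc k) * B (Suc k)))"
      using sab z1 unfolding A_def B_def by (simp add: norm_mult norm_power norm_inverse)
    have iz1: "norm (inverse z) = 1" using z1 by (simp add: norm_inverse)
    show ?thesis
    proof (intro conjI impI)
      assume True: "z \<in> set_E \<alpha> \<beta>"
      have sA': "summable (\<lambda>j. \<alpha> (k + 1 + j) * z ^ (j + 1))" for k using True unfolding set_E_def by auto
      have sE0: "summable (\<lambda>k. cmod (\<beta> (k+1) * q21 \<alpha> z k))" using True unfolding set_E_def by auto
      have sE: "summable (\<lambda>k. norm (B (Suc k) * (\<Sum>j. A (Suc k + j))))"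
      proof (rule summable_cong[THEN iffD1, OF _ sE0])
        show "\<forall>\<^sub>F k in sequentially. cmod (\<beta> (k+1) * q21 \<alpha> z k) = norm (B (Suc k) * (\<Sum>j. A (Suc k + j)))"
        proof (rule always_eventually, rule allI)
          fix k
          show "cmod (\<beta> (k+1) * q21 \<alpha> z k) = norm (B (Suc k) * (\<Sum>j. A (Suc k + j)))"
            unfolding A_def B_def q21_def norm_mult tail_eq[OF z1 sA'] using z1
            by (simp add: norm_power norm_mult norm_inverse)
        qed
      qed
      have "convergent p" by (rule recur_conv[OF pr qr sA sB sE sAB])
      thus "convergent (\<lambda>n. PP c z n)" unfolding p_def .
    next
      assume T: "z \<in> set_E_tilde \<alpha> \<beta>"
      have sB': "summable (\<lambda>j. \<beta> (k + 1 + j) * inverse z ^ (j + 1))" for k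
        using T unfolding set_E_tilde_def by (auto simp: pwneg[of z "Suc _", simplified])
      have sE0: "summable (\<lambda>k. cmod (\<alpha> (k+1) * q21_tilde \<beta> z k))" using T unfolding set_E_tilde_def by auto
      have sE: "summable (\<lambda>k. norm (A (Suc k) * (\<Sum>j. B (Suc k + j))))"
      proof (rule summable_cong[THEN iffD1, OF _ sE0])
        show "\<forall>\<^sub>F k in sequentially. cmod (\<alpha> (k+1) * q21_tilde \<beta> z k) = norm (A (Suc k) * (\<Sum>j. B (Suc k + j)))"
        proof (rule always_eventually, rule allI)
          fix k
          show "cmod (\<alpha> (k+1) * q21_tilde \<beta> z k) = norm (A (Suc k) * (\<Sum>j. B (Suc k + j)))"
            unfolding A_def B_def q21_tilde_def norm_mult tail_eq[OF iz1 sB'] using z1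
            by (simp add: norm_power norm_mult pwneg[of z "Suc _", simplified])
        qed
      qed
      have sBA: "summable (\<lambda>k. norm (B (Suc k) * A (Suc k)))" using sAB by (simp add: mult.commute)
      have "convergent q" by (rule recur_conv[OF qr pr sB sA sE sBA])
      thus "convergent (\<lambda>n. PP (rv c) (inverse z) n)" unfolding q_def .
    qed
  qed
  show ?thesis unfolding al be
  proof (intro conjI allI impI)
    fix \<theta> :: real
    define z where "z = exp (\<i> * of_real \<theta>)"
    assume "exp (\<i> * of_real \<theta>) \<in> set_E \<alpha> \<beta> \<inter> set_M \<alpha> \<beta>"
    hence zE: "z \<in> set_E \<alpha> \<beta>" and zM: "z \<in> set_M \<alpha> \<beta>" unfolding z_def by auto
    have "convergent (\<lambda>n. PP c z n)" using common[OF ez[of \<theta>, folded z_def] zM] zE by blast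
    then obtain Lp where Lp: "(\<lambda>n. PP c z n) \<longlonglongrightarrow> Lp" by (auto simp: convergent_def)
    have "(\<lambda>n. PP c z n * inverse (ll c n)) \<longlonglongrightarrow> Lp * Lg" by (intro tendsto_mult Lp Lg)
    moreover have "(\<lambda>n. PP c z n * inverse (ll c n)) = (\<lambda>n. u_poly \<nu> h n z)"
      using u_PP[of \<nu> h] H unfolding c_def by (auto simp: field_simps)
    ultimately show "\<exists>L. (\<lambda>n. u_poly \<nu> h n (exp (\<i> * of_real \<theta>))) \<longlonglongrightarrow> L"
      unfolding z_def by auto
  next
    fix \<theta> :: real
    define z where "z = exp (\<i> * of_real \<theta>)"
    assume "exp (\<i> * of_real \<theta>) \<in> set_E_tilde \<alpha> \<beta> \<inter> set_M \<alpha> \<beta>"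
    hence zE: "z \<in> set_E_tilde \<alpha> \<beta>" and zM: "z \<in> set_M \<alpha> \<beta>" unfolding z_def by auto
    have "convergent (\<lambda>n. PP (rv c) (inverse z) n)" using common[OF ez[of \<theta>, folded z_def] zM] zE by blast
    then obtain Lp where Lp: "(\<lambda>n. PP (rv c) (inverse z) n) \<longlonglongrightarrow> Lp" by (auto simp: convergent_def)
    have "(\<lambda>n. PP (rv c) (inverse z) n * inverse (ll c n)) \<longlonglongrightarrow> Lp * Lg" by (intro tendsto_mult Lp Lg)
    moreover have "(\<lambda>n. PP (rv c) (inverse z) n * inverse (ll c n)) = (\<lambda>n. v_poly \<nu> h n z)"
      using v_PP[of \<nu> h] H unfolding c_def by (auto simp: field_simps)
    ultimately show "\<exists>L. (\<lambda>n. v_poly \<nu> h n (exp (\<i> * of_real \<theta>))) \<longlonglongrightarrow> L"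
      unfolding z_def by auto
  qed
qed

end
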